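(* Let ${\bm k}$ be a field of characteristic different from $2$, and let $X_1,\dots,X_n\in\hat{A}_{n,{\bm k}}$ be given by $$X_i = x_i + \sum_{l = 1}^n x_l\sum_{N = 1}^\infty \sum_{j = 1}^n p^{N-1,l}_{ij}(\partial^1,\ldots,\partial^n)\,\partial^j,$$ where each $p^{N-1,l}_{ij}$ is a homogeneous polynomial of degree $N-1$ in $\partial^1,\ldots,\partial^n$ with $p^{N-1,l}_{ij}=-p^{N-1,l}_{ji}$. Then: (1) there is a well-defined ${\bm k}$-linear map $\tilde{e}:{\bm k}[x_1,\ldots,x_n]\to \hat{A}_{n,{\bm k}}$ given, for all $k\ge 0$ and all (non-strictly) monotone $\alpha:\{1,\ldots,k\}\to\{1,\ldots,n\}$, by $$\tilde{e}(x_{\alpha_1}\cdots x_{\alpha_k}) = \sum_{\sigma\in\Sigma(k)} X_{\alpha_{\sigma(1)}}\cdots X_{\alpha_{\sigma(k)}};$$ (2) $\tilde{e}(P_k)\triangleright 1 = k!\,P_k$ for every polynomial $P_k\in{\bm k}[x_1,\ldots,x_n]$ homogeneous of degree $k$; (3) $\tilde{e}$ is injective if and only if $\operatorname{char}{\bm k}=0$, and in that case the elements $\tilde{e}(x_{\alpha_1}\cdots x_{\alpha_k})$, for $k\ge 0$ and $\alpha$ monotone, are linearly independent; (4) if $\operatorname{char}{\bm k}=0$, the ${\bm k}$-linear map $e:{\bm k}[x_1,\ldots,x_n]\to \hat{A}_{n,{\bm k}}$ defined on monomials of degree $k$ by $$e(x_{\alpha_1}\cdots x_{\alpha_k}) =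 \frac{1}{k!}\sum_{\sigma\in\Sigma(k)} X_{\alpha_{\sigma(1)}}\cdots X_{\alpha_{\sigma(k)}}$$ is injective.
   Context: $\Sigma(k)$ is the symmetric group on $k$ letters, and $\alpha_i=\alpha(i)$. The $n$-th Weyl algebra $A_{n,{\bm k}}$ is the associative ${\bm k}$-algebra generated by $x_1,\ldots,x_n,\partial^1,\ldots,\partial^n$ with relations $[x_i,x_j]=0$, $[\partial^i,\partial^j]=0$, $[\partial^j,x_i]=\delta^j_i$. Its completion $\hat{A}_{n,{\bm k}}$ by the degree of differential operators consists of formal power series in $\partial^1,\ldots,\partial^n$ with left coefficients in ${\bm k}[x_1,\ldots,x_n]$. The Fock action $\triangleright$ on ${\bm k}[x_1,\ldots,x_n]$ lets $x_i$ act by multiplication and $\partial^j$ by $\partial/\partial x_j$; $1$ is the vacuum. *)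

theory Defs
  imports Main "HOL-Combinatorics.Permutations"
begin

(* Variables x_i, \<partial>^i are indexed by a finite linearly ordered type 'n
   (n = CARD('n)).  A multi-index is a function 'n \<Rightarrow> nat.            *)
type_synonym 'n mon = "'n \<Rightarrow> nat"

(* Polynomials in k[x_1..x_n]: coefficient functions on multi-indices
   with finite support.  P a = coefficient of x^a.                       *)
definition is_poly :: "('n mon \<Rightarrow> 'k::zero) \<Rightarrow> bool" where
  "is_poly P \<longleftrightarrow> finite {a. P a \<noteq> 0}"

(* Completed Weyl algebra: normally ordered formal series
   F = \<Sum>_{b} (\<Sum>_a F b a x^a) \<partial>^b, where for each \<partial>-exponent b the
   left coefficient is a polynomial in x (finitely many a).              *)
definition is_weyl :: "('n mon \<Rightarrow> 'n mon \<Rightarrow> 'k::zero) \<Rightarrow> bool" where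
  "is_weyl F \<longleftrightarrow> (\<forall>b. finite {a. F b a \<noteq> 0})"

definition mzero :: "'n mon" where "mzero = (\<lambda>_. 0)"

definition delta :: "'n \<Rightarrow> 'n mon" where "delta i = (\<lambda>j. if j = i then 1 else 0)"

definition mdeg :: "'n::finite mon \<Rightarrow> nat" where "mdeg a = (\<Sum>i\<in>UNIV. a i)"

definition mchoose :: "'n::finite mon \<Rightarrow> 'n mon \<Rightarrow> nat" where
  "mchoose b m = (\<Prod>i\<in>UNIV. b i choose m i)"

definition mfact :: "'n::finite mon \<Rightarrow> nat" where
  "mfact m = (\<Prod>i\<in>UNIV. fact (m i))"

definition wzero :: "'n mon \<Rightarrow> 'n mon \<Rightarrow> 'k::zero" where
  "wzero = (\<lambda>b a. 0)"

definition wone :: "'n mon \<Rightarrow> 'n mon \<Rightarrow> 'k::{zero,one}" where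
  "wone = (\<lambda>b a. if b = mzero \<and> a = mzero then 1 else 0)"

definition wadd :: "('n mon \<Rightarrow> 'n mon \<Rightarrow> 'k::plus) \<Rightarrow> ('n mon \<Rightarrow> 'n mon \<Rightarrow> 'k) \<Rightarrow> ('n mon \<Rightarrow> 'n mon \<Rightarrow> 'k)" where
  "wadd F G = (\<lambda>b a. F b a + G b a)"

definition wscale :: "'k::times \<Rightarrow> ('n mon \<Rightarrow> 'n mon \<Rightarrow> 'k) \<Rightarrow> ('n mon \<Rightarrow> 'n mon \<Rightarrow> 'k)" where
  "wscale c F = (\<lambda>b a. c * F b a)"

definition wsum :: "('s \<Rightarrow> 'n mon \<Rightarrow> 'n mon \<Rightarrow> 'k::comm_monoid_add) \<Rightarrow> 's set \<Rightarrow> ('n mon \<Rightarrow> 'n mon \<Rightarrow> 'k)" where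
  "wsum f S = (\<lambda>b a. \<Sum>s\<in>S. f s b a)"

(* Product in the completed Weyl algebra, from
   (x^a' \<partial>^b)(x^c \<partial>^d) = \<Sum>_{m \<le> b, m \<le> c} C(b,m) C(c,m) m! x^(a'+c-m) \<partial>^(b-m+d),
   where b = b' + m.  All index sets are finite (d \<le> e, b' \<le> e, a' \<le> a,
   c in the support of the polynomial G d, m \<le> c).                    *)
definition wmul :: "('n::finite mon \<Rightarrow> 'n mon \<Rightarrow> 'k::comm_ring_1) \<Rightarrow> ('n mon \<Rightarrow> 'n mon \<Rightarrow> 'k) \<Rightarrow> ('n mon \<Rightarrow> 'n mon \<Rightarrow> 'k)" where
  "wmul F G = (\<lambda>e a.
     \<Sum>d\<in>{d. d \<le> e}. \<Sum>c\<in>{c. G d c \<noteq> 0}. \<Sum>m\<in>{m. m \<le> c}. \<Sum>b'\<in>{b'. b' \<le> e}. \<Sum>a'\<in>{a'. a' \<le> a}.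
       if (\<lambda>i. b' i + d i) = e \<and> (\<lambda>i. a' i + (c i - m i)) = a
       then F (\<lambda>i. b' i + m i) a' * G d c * of_nat (mchoose (\<lambda>i. b' i + m i) m * mchoose c m * mfact m)
       else 0)"

definition wprod :: "('n::finite mon \<Rightarrow> 'n mon \<Rightarrow> 'k::comm_ring_1) list \<Rightarrow> ('n mon \<Rightarrow> 'n mon \<Rightarrow> 'k)" where
  "wprod Fs = foldr wmul Fs wone"

(* The generators
   X_i = x_i + \<Sum>_l x_l \<Sum>_{N\<ge>1} \<Sum>_j p^{N-1,l}_{ij}(\<partial>) \<partial>^j.
   p d l i j m = coefficient of \<partial>^m in p^{d,l}_{ij}.  The coefficient of
   x_l \<partial>^b receives contributions p^{N-1,l}_{ij}(b - e_j) for b_j \<ge> 1; for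
   homogeneous p only N = |b| contributes, so the sum over N may be
   taken over 1..|b| (coefficientwise meaning of the formal series).     *)
definition Xgen :: "(nat \<Rightarrow> 'n \<Rightarrow> 'n \<Rightarrow> 'n \<Rightarrow> 'n mon \<Rightarrow> 'k::comm_ring_1) \<Rightarrow> 'n::finite \<Rightarrow> ('n mon \<Rightarrow> 'n mon \<Rightarrow> 'k)" where
  "Xgen p i = (\<lambda>b a.
     (if b = mzero \<and> a = delta i then 1 else 0)
     + (\<Sum>l\<in>UNIV. if a = delta l
          then (\<Sum>N\<in>{1..mdeg b}. \<Sum>j\<in>UNIV.
                  if 1 \<le> b j then p (N - 1) l i j (\<lambda>t. b t - delta j t) else 0)
          else 0))"

(* monomial x_{\<alpha>_1}...x_{\<alpha>_k} for \<alpha> given as the list [\<alpha>_1,...,\<alpha>_k] *)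
definition mono_of :: "'n list \<Rightarrow> ('n mon \<Rightarrow> 'k::{zero,one})" where
  "mono_of xs = (\<lambda>a. if a = (\<lambda>i. count_list xs i) then 1 else 0)"

(* \<Sum>_{\<sigma>\<in>\<Sigma>(k)} X_{\<alpha>_\<sigma>(1)} ... X_{\<alpha>_\<sigma>(k)}, 0-indexed *)
definition esym :: "('n::finite \<Rightarrow> ('n mon \<Rightarrow> 'n mon \<Rightarrow> 'k::comm_ring_1)) \<Rightarrow> 'n list \<Rightarrow> ('n mon \<Rightarrow> 'n mon \<Rightarrow> 'k)" where
  "esym X xs = wsum (\<lambda>\<sigma>. wprod (map (\<lambda>t. X (xs ! \<sigma> t)) [0..<length xs]))
                    {\<sigma>. \<sigma> permutes {..<length xs}}"

definition lin_map :: "(('n mon \<Rightarrow> 'k::comm_ring_1) \<Rightarrow> ('n mon \<Rightarrow> 'n mon \<Rightarrow> 'k)) \<Rightarrow> bool" where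
  "lin_map E \<longleftrightarrow>
     (\<forall>P Q. is_poly P \<longrightarrow> is_poly Q \<longrightarrow> E (\<lambda>a. P a + Q a) = wadd (E P) (E Q)) \<and>
     (\<forall>c P. is_poly P \<longrightarrow> E (\<lambda>a. c * P a) = wscale c (E P))"

(* Fock action: (x^a \<partial>^b) \<triangleright> x^c = [b \<le> c] C(c,b) b! x^(a + c - b) *)
definition fock :: "('n::finite mon \<Rightarrow> 'n mon \<Rightarrow> 'k::comm_ring_1) \<Rightarrow> ('n mon \<Rightarrow> 'k) \<Rightarrow> ('n mon \<Rightarrow> 'k)" where
  "fock F q = (\<lambda>e. \<Sum>c\<in>{c. q c \<noteq> 0}. \<Sum>b\<in>{b. b \<le> c}. \<Sum>a\<in>{a. a \<le> e}.
      if (\<lambda>i. a i + (c i - b i)) = e then F b a * q c * of_nat (mchoose c b * mfact b) else 0)"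

definition vac :: "'n mon \<Rightarrow> 'k::{zero,one}" where
  "vac = (\<lambda>a. if a = mzero then 1 else 0)"

end

theory Submission
  imports Defs "HOL-Combinatorics.Multiset_Permutations"
begin

lemma sum_nz: "sum f S \<noteq> 0 \<Longrightarrow> \<exists>x\<in>S. f x \<noteq> 0"
  by (meson sum.neutral)

lemma prod_nz: "(x::'a::comm_ring_1) * y * z \<noteq> 0 \<Longrightarrow> x \<noteq> 0"
  by auto

lemma sum5_nz: "(\<Sum>d\<in>A. \<Sum>c\<in>B d. \<Sum>m\<in>C d c. \<Sum>b\<in>D d c m. \<Sum>a'\<in>E d c m b. f d c m b a') \<noteq> 0 \<Longrightarrow>
  \<exists>d\<in>A. \<exists>c\<in>B d. \<exists>m\<in>C d c. \<exists>b\<in>D d c m. \<exists>a'\<in>E d c m b. f d c m b a' \<noteq> 0"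
  apply (drule sum_nz, erule bexE)+
  apply blast
  done

lemma fin_le: "finite {d::'n::finite mon. d \<le> e}"
proof -
  have "{d::'n mon. d \<le> e} \<subseteq> PiE UNIV (\<lambda>i. {..e i})"
    by (auto simp: le_fun_def PiE_def Pi_def extensional_def)
  moreover have "finite (PiE (UNIV::'n set) (\<lambda>i. {..e i}))"
    by (rule finite_PiE) auto
  ultimately show ?thesis by (rule finite_subset)
qed

lemma weyl_wone: "is_weyl wone"
  unfolding is_weyl_def wone_def by auto

lemma weyl_Xgen: "is_weyl (Xgen p i)"
  unfolding is_weyl_def
proof
  fix b
  have "{a. Xgen p i b a \<noteq> 0} \<subseteq> insert (delta i) (range delta)"
    unfolding Xgen_def by (auto dest!: sum_nz split: if_splits)
  then show "finite {a. Xgen p i b a \<noteq> 0}"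
    by (rule finite_subset) auto
qed

lemma weyl_wsum: "finite S \<Longrightarrow> (\<And>s. s \<in> S \<Longrightarrow> is_weyl (f s)) \<Longrightarrow> is_weyl (wsum f S)"
  unfolding is_weyl_def wsum_def
proof
  fix b assume "finite S" "\<And>s. s \<in> S \<Longrightarrow> \<forall>b. finite {a. f s b a \<noteq> 0}"
  then have "finite (\<Union>s\<in>S. {a. f s b a \<noteq> 0})" by auto
  moreover have "{a. (\<Sum>s\<in>S. f s b a) \<noteq> 0} \<subseteq> (\<Union>s\<in>S. {a. f s b a \<noteq> 0})"
    by (auto dest!: sum_nz)
  ultimately show "finite {a. (\<Sum>s\<in>S. f s b a) \<noteq> 0}" using finite_subset by blast
qed

lemma weyl_wscale: "is_weyl (F::'n mon \<Rightarrow> 'n mon \<Rightarrow> 'k::comm_ring_1) \<Longrightarrow> is_weyl (wscale c F)"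
  unfolding is_weyl_def wscale_def
proof (intro allI impI)
  fix b assume "\<forall>b. finite {a. F b a \<noteq> 0}"
  moreover have "{a. c * F b a \<noteq> 0} \<subseteq> {a. F b a \<noteq> 0}" by auto
  ultimately show "finite {a. c * F b a \<noteq> 0}" using finite_subset by blast
qed

lemma weyl_wmul:
  fixes F G :: "'n::finite mon \<Rightarrow> 'n mon \<Rightarrow> 'k::comm_ring_1"
  assumes F: "is_weyl F" and G: "is_weyl G"
  shows "is_weyl (wmul F G)"
  unfolding is_weyl_def
proof
  fix e :: "'n mon"
  define T where "T = (\<Union>d\<in>{d. d\<le>e}. \<Union>c\<in>{c. G d c \<noteq> 0}. \<Union>m\<in>{m. m \<le> c}. \<Union>b'\<in>{b'. b' \<le> e}.
      (\<lambda>a'. \<lambda>i. a' i + (c i - m i)) ` {a'. F (\<lambda>i. b' i + m i) a' \<noteq> 0})"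
  have "finite T" unfolding T_def using F G fin_le
    by (auto simp: is_weyl_def intro!: finite_UN_I)
  moreover have "{a. wmul F G e a \<noteq> 0} \<subseteq> T"
  proof
    fix a assume "a \<in> {a. wmul F G e a \<noteq> 0}"
    then have "wmul F G e a \<noteq> 0" by simp
    from sum5_nz[OF this[unfolded wmul_def]] obtain d c m b' a' where
      h: "d \<le> e" "G d c \<noteq> 0" "m \<le> c" "b' \<le> e"
      and nz: "(if (\<lambda>i. b' i + d i) = e \<and> (\<lambda>i. a' i + (c i - m i)) = a
       then F (\<lambda>i. b' i + m i) a' * G d c * of_nat (mchoose (\<lambda>i. b' i + m i) m * mchoose c m * mfact m)
       else 0) \<noteq> 0"
      by blast
    from nz have "a = (\<lambda>i. a' i + (c i - m i))" "F (\<lambda>i. b' i + m i) a' \<noteq> 0"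
      by (auto split: if_splits)
    then show "a \<in> T" unfolding T_def using h by blast
  qed
  ultimately show "finite {a. wmul F G e a \<noteq> 0}" using finite_subset by blast
qed

lemma weyl_wprod: "(\<And>F. F \<in> set Fs \<Longrightarrow> is_weyl F) \<Longrightarrow> is_weyl (wprod Fs)"
  unfolding wprod_def by (induction Fs) (auto simp: weyl_wone weyl_wmul)

lemma weyl_esym: "is_weyl (esym (Xgen p) xs)"
  unfolding esym_def
  by (rule weyl_wsum) (auto intro!: weyl_wprod simp: weyl_Xgen finite_permutations)

lemma le_mzero_iff: "(b::'n mon) \<le> mzero \<longleftrightarrow> b = mzero"
  by (auto simp: le_fun_def mzero_def)

lemma set_le_mzero: "{b::'n mon. b \<le> mzero} = {mzero}"
  using le_mzero_iff by blast

lemma sum_le_mzero: "(\<Sum>b\<in>{b::'n mon. b \<le> mzero}. f b) = f mzero" by (simp add: set_le_mzero)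

lemma vac_supp: "{c. (vac c :: 'k::{zero_neq_one}) \<noteq> 0} = {mzero}"
  by (auto simp: vac_def)

lemma mchoose_self[simp]: "mchoose m m = 1" by (simp add: mchoose_def)
lemma mchoose_zero[simp]: "mchoose c mzero = 1" by (simp add: mchoose_def mzero_def)
lemma mfact_zero[simp]: "mfact mzero = 1" by (simp add: mfact_def mzero_def)
lemma mchoose_zero'[simp]: "mchoose c (\<lambda>_. 0) = 1" by (simp add: mchoose_def)
lemma mfact_zero'[simp]: "mfact (\<lambda>_. 0) = 1" by (simp add: mfact_def)
lemma set_le_mzero': "{b::'n mon. b \<le> (\<lambda>_. 0)} = {\<lambda>_. 0}"
  using set_le_mzero unfolding mzero_def .

lemma fock_vac: "fock F vac = F mzero"
proof
  fix e
  have "fock F vac e = (\<Sum>a\<in>{a. a \<le> e}. if a = e then F mzero a else 0)"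
    unfolding fock_def vac_supp
    apply (simp add: sum_le_mzero)
    apply (unfold vac_def)
    apply (rule sum.cong[OF refl])
    apply simp
    done
  also have "\<dots> = F mzero e" by (subst sum.delta) (rule fin_le, simp)
  finally show "fock F vac e = F mzero e" .
qed

definition kern :: "('n::finite mon \<Rightarrow> 'n mon \<Rightarrow> 'k::comm_ring_1) \<Rightarrow> 'n mon \<Rightarrow> 'n mon \<Rightarrow> 'k" where
  "kern F c a = (\<Sum>m\<in>{m. m \<le> c}. \<Sum>a'\<in>{a'. a' \<le> a}.
     if (\<lambda>i. a' i + (c i - m i)) = a then F m a' * of_nat (mchoose c m * mfact m) else 0)"

lemma wmul_mzero:
  assumes "finite C" "{c. G mzero c \<noteq> 0} \<subseteq> C"
  shows "wmul F G mzero a = (\<Sum>c\<in>C. G mzero c * kern F c a)"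
proof -
  have "wmul F G mzero a = (\<Sum>c\<in>{c. G mzero c \<noteq> 0}. G mzero c * kern F c a)"
    unfolding wmul_def kern_def
    by (simp only: sum_le_mzero) (simp add: mzero_def sum_distrib_left, intro sum.cong refl, simp add: mult_ac mzero_def)
  also have "\<dots> = (\<Sum>c\<in>C. G mzero c * kern F c a)"
    by (rule sum.mono_neutral_left) (use assms in auto)
  finally show ?thesis .
qed

definition Gs :: "('n::finite \<Rightarrow> ('n mon \<Rightarrow> 'n mon \<Rightarrow> 'k::comm_ring_1)) \<Rightarrow> (nat \<Rightarrow> 'n) \<Rightarrow> nat set \<Rightarrow> ('n mon \<Rightarrow> 'n mon \<Rightarrow> 'k)" where
  "Gs X h A = wsum (\<lambda>js. wprod (map (\<lambda>t. X (h t)) js)) (permutations_of_set A)"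

lemma Gs_decomp:
  assumes "finite A" "A \<noteq> {}"
  shows "Gs X h A b a = (\<Sum>u\<in>A. \<Sum>js\<in>permutations_of_set (A - {u}).
            wmul (X (h u)) (wprod (map (\<lambda>t. X (h t)) js)) b a)"
proof -
  have "Gs X h A b a = (\<Sum>js\<in>(\<Union>u\<in>A. (\<lambda>xs. u # xs) ` permutations_of_set (A - {u})).
             wprod (map (\<lambda>t. X (h t)) js) b a)"
    unfolding Gs_def wsum_def using permutations_of_set_nonempty[OF assms(2)] by simp
  also have "\<dots> = (\<Sum>u\<in>A. \<Sum>js\<in>(\<lambda>xs. u # xs) ` permutations_of_set (A - {u}).
             wprod (map (\<lambda>t. X (h t)) js) b a)"
    by (rule sum.UNION_disjoint) (use assms in auto)
  also have "\<dots> = (\<Sum>u\<in>A. \<Sum>js\<in>permutations_of_set (A - {u}).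
            wmul (X (h u)) (wprod (map (\<lambda>t. X (h t)) js)) b a)"
    by (rule sum.cong[OF refl], subst sum.reindex) (auto simp: wprod_def)
  finally show ?thesis .
qed

lemma esym_Gs: "esym X xs = Gs X (\<lambda>t. xs ! t) {..<length xs}"
proof -
  let ?n = "length xs"
  let ?T = "permutations_of_set {..<?n}"
  have "(\<Sum>\<sigma>\<in>{\<sigma>. \<sigma> permutes {..<?n}}. wprod (map (\<lambda>t. X (xs ! \<sigma> t)) [0..<?n]) b a)
      = (\<Sum>js\<in>?T. wprod (map (\<lambda>t. X (xs ! t)) js) b a)" for b a
  proof (rule sum.reindex_bij_witness[where j = "\<lambda>\<sigma>. map \<sigma> [0..<?n]" and i = "\<lambda>js t. if t < ?n then js ! t else t"])
    fix \<sigma> assume "\<sigma> \<in> {\<sigma>. \<sigma> permutes {..<?n}}"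
    then have p: "\<sigma> permutes {..<?n}" by simp
    show "(\<lambda>t. if t < ?n then map \<sigma> [0..<?n] ! t else t) = \<sigma>"
      using permutes_not_in[OF p] by (auto simp: fun_eq_iff)
    show "map \<sigma> [0..<?n] \<in> ?T"
      using permutes_image[OF p] permutes_inj_on[OF p]
      by (auto simp: permutations_of_set_def distinct_map atLeast0LessThan)
    show "wprod (map (\<lambda>t. X (xs ! t)) (map \<sigma> [0..<?n])) b a = wprod (map (\<lambda>t. X (xs ! \<sigma> t)) [0..<?n]) b a"
      by (simp add: comp_def)
  next
    fix js assume js: "js \<in> ?T"
    then have len: "length js = ?n" by (simp add: length_finite_permutations_of_set)
    from js have d: "distinct js" and s: "set js = {..<?n}" by (auto simp: permutations_of_set_def)
    show "map (\<lambda>t. if t < ?n then js ! t else t) [0..<?n] = js"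
      using len by (auto intro: nth_equalityI)
    have "bij_betw (\<lambda>t. if t < ?n then js ! t else t) {..<?n} {..<?n}"
      unfolding bij_betw_def
    proof
      show "inj_on (\<lambda>t. if t < ?n then js ! t else t) {..<?n}"
        using d len by (auto simp: inj_on_def nth_eq_iff_index_eq)
      have "(\<lambda>t. if t < ?n then js ! t else t) ` {..<?n} = (\<lambda>t. js ! t) ` {..<length js}"
        using len by auto
      also have "\<dots> = set js" by (auto simp: set_conv_nth)
      finally show "(\<lambda>t. if t < ?n then js ! t else t) ` {..<?n} = {..<?n}" using s by simp
    qed
    then show "(\<lambda>t. if t < ?n then js ! t else t) \<in> {\<sigma>. \<sigma> permutes {..<?n}}"
      by (auto intro!: bij_imp_permutes split: if_splits)
  qed
  then show ?thesis unfolding esym_def Gs_def wsum_def by (auto simp: fun_eq_iff)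
qed

definition wcm :: "'n::finite mon \<Rightarrow> 'n mon \<Rightarrow> 'k::comm_ring_1" where
  "wcm c m = of_nat (mchoose c m * mfact m)"

definition Qf :: "(nat \<Rightarrow> 'n \<Rightarrow> 'n \<Rightarrow> 'n \<Rightarrow> 'n mon \<Rightarrow> 'k::comm_ring_1) \<Rightarrow> 'n \<Rightarrow> 'n \<Rightarrow> 'n::finite mon \<Rightarrow> 'k" where
  "Qf p l i b = (\<Sum>N\<in>{1..mdeg b}. \<Sum>j\<in>UNIV.
                  if 1 \<le> b j then p (N - 1) l i j (\<lambda>t. b t - delta j t) else 0)"

lemma Xgen_eq: "Xgen p i b a = (if b = mzero \<and> a = delta i then 1 else 0) + (\<Sum>l\<in>UNIV. if a = delta l then Qf p l i b else 0)"
  unfolding Xgen_def Qf_def by simp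

lemma cond_iff: "((\<lambda>i. a' i + d i) = (t::'n mon)) \<longleftrightarrow> (d \<le> t \<and> a' = (\<lambda>i. t i - d i))"
proof
  assume "(\<lambda>i. a' i + d i) = t"
  then have h: "\<And>i. a' i + d i = t i" by (auto simp: fun_eq_iff)
  show "d \<le> t \<and> a' = (\<lambda>i. t i - d i)"
  proof
    show "d \<le> t" by (rule le_funI) (metis h le_add2)
    show "a' = (\<lambda>i. t i - d i)" by (rule ext) (metis h add_diff_cancel_right')
  qed
next
  assume "d \<le> t \<and> a' = (\<lambda>i. t i - d i)"
  then show "(\<lambda>i. a' i + d i) = t" by (auto simp: fun_eq_iff le_fun_def)
qed

lemma cond_iff2: "(d \<le> t \<and> (\<lambda>k. t k - d k) = e) \<longleftrightarrow> (t::'n mon) = (\<lambda>k. e k + d k)"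
  by (auto simp: le_fun_def fun_eq_iff) (metis le_add_diff_inverse2)

lemma sum_delta_cond:
  assumes "finite S"
  shows "(\<Sum>a\<in>S. if P \<and> a = x then f a else 0) = (if P \<and> x \<in> S then f x else 0)"
  using assms by (cases P) (simp_all add: sum.delta sum.delta')

lemma kern_alt: "kern F c t = (\<Sum>m\<in>{m. m \<le> c}. if (\<lambda>k. c k - m k) \<le> t then F m (\<lambda>k. t k - (c k - m k)) * wcm c m else 0)"
  unfolding kern_def wcm_def
proof (rule sum.cong[OF refl])
  fix m
  have "(\<Sum>a'\<in>{a'. a' \<le> t}. if (\<lambda>i. a' i + (c i - m i)) = t then F m a' * of_nat (mchoose c m * mfact m) else 0)
     = (\<Sum>a'\<in>{a'. a' \<le> t}. if (\<lambda>i. c i - m i) \<le> t \<and> a' = (\<lambda>i. t i - (c i - m i)) then F m a' * of_nat (mchoose c m * mfact m) else 0)"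
    by (simp only: cond_iff)
  also have "\<dots> = (if (\<lambda>k. c k - m k) \<le> t then F m (\<lambda>k. t k - (c k - m k)) * of_nat (mchoose c m * mfact m) else 0)"
    by (subst sum_delta_cond) (auto simp: fin_le fin_le[unfolded le_fun_def] le_fun_def)
  finally show "(\<Sum>a'\<in>{a'. a' \<le> t}. if (\<lambda>i. a' i + (c i - m i)) = t then F m a' * of_nat (mchoose c m * mfact m) else 0)
     = (if (\<lambda>k. c k - m k) \<le> t then F m (\<lambda>k. t k - (c k - m k)) * of_nat (mchoose c m * mfact m) else 0)" .
qed

lemma kern_X:
  "kern (Xgen p i) c t = (if t = (\<lambda>k. delta i k + c k) then 1 else 0)
     + (\<Sum>l\<in>UNIV. \<Sum>m\<in>{m. m \<le> c}. if t = (\<lambda>k. delta l k + (c k - m k)) then Qf p l i m * wcm c m else 0)"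
proof -
  have "kern (Xgen p i) c t = (\<Sum>m\<in>{m. m \<le> c}.
      (if m = mzero \<and> t = (\<lambda>k. delta i k + (c k - m k)) then wcm c m else 0)
      + (\<Sum>l\<in>UNIV. if t = (\<lambda>k. delta l k + (c k - m k)) then Qf p l i m * wcm c m else 0))"
    unfolding kern_alt
  proof (rule sum.cong[OF refl])
    fix m
    show "(if (\<lambda>k. c k - m k) \<le> t then Xgen p i m (\<lambda>k. t k - (c k - m k)) * wcm c m else 0) =
      (if m = mzero \<and> t = (\<lambda>k. delta i k + (c k - m k)) then wcm c m else 0)
      + (\<Sum>l\<in>UNIV. if t = (\<lambda>k. delta l k + (c k - m k)) then Qf p l i m * wcm c m else 0)"
      unfolding Xgen_eq
      by (auto simp: distrib_right sum_distrib_right simp flip: cond_iff2 intro!: sum.cong)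
  qed
  also have "\<dots> = (\<Sum>m\<in>{m. m \<le> c}. if m = mzero \<and> t = (\<lambda>k. delta i k + (c k - m k)) then wcm c m else 0)
      + (\<Sum>m\<in>{m. m \<le> c}. \<Sum>l\<in>UNIV. if t = (\<lambda>k. delta l k + (c k - m k)) then Qf p l i m * wcm c m else 0)"
    by (rule sum.distrib)
  also have "(\<Sum>m\<in>{m. m \<le> c}. if m = mzero \<and> t = (\<lambda>k. delta i k + (c k - m k)) then wcm c m else 0)
     = (if t = (\<lambda>k. delta i k + c k) then 1 else 0)"
  proof -
    have "(\<Sum>m\<in>{m. m \<le> c}. if m = mzero \<and> t = (\<lambda>k. delta i k + (c k - m k)) then wcm c m else 0)
        = (\<Sum>m\<in>{m. m \<le> c}. if t = (\<lambda>k. delta i k + c k) \<and> m = mzero then wcm c m else 0)"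
      by (rule sum.cong) (auto simp: mzero_def)
    also have "\<dots> = (if t = (\<lambda>k. delta i k + c k) then 1 else 0)"
      by (subst sum_delta_cond) (auto simp: fin_le fin_le[unfolded le_fun_def] mzero_def le_fun_def wcm_def)
    finally show ?thesis .
  qed
  also have "(\<Sum>m\<in>{m. m \<le> c}. \<Sum>l\<in>UNIV. if t = (\<lambda>k. delta l k + (c k - m k)) then Qf p l i m * wcm c m else 0)
     = (\<Sum>l\<in>UNIV. \<Sum>m\<in>{m. m \<le> c}. if t = (\<lambda>k. delta l k + (c k - m k)) then Qf p l i m * wcm c m else 0)"
    by (rule sum.swap)
  finally show ?thesis .
qed

definition PG :: "'n::finite mon \<Rightarrow> 'n mon \<Rightarrow> nat" where
  "PG a s = (\<Prod>k\<in>UNIV. (a k choose s k) * fact (s k))"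

lemma absorb: "x * ((x - 1) choose y) * fact y = (x choose Suc y) * fact (Suc y)"
proof -
  have "(x choose Suc y) * fact (Suc y) = (Suc y * (x choose Suc y)) * fact y"
    by (simp add: algebra_simps)
  also have "\<dots> = x * ((x - 1) choose y) * fact y" by (simp only: binomial_absorption)
  finally show ?thesis by simp
qed

lemma PG_shift:
  "a i * (mchoose (\<lambda>k. a k - delta i k) (\<lambda>k. m k + delta j k) * mfact (\<lambda>k. m k + delta j k))
   = PG a (\<lambda>k. m k + delta i k + delta j k)"
proof -
  define g where "g k = ((a k - delta i k) choose (m k + delta j k)) * fact (m k + delta j k)" for k
  define h where "h k = (a k choose (m k + delta i k + delta j k)) * fact (m k + delta i k + delta j k)" for k
  have 1: "mchoose (\<lambda>k. a k - delta i k) (\<lambda>k. m k + delta j k) * mfact (\<lambda>k. m k + delta j k) = (\<Prod>k\<in>UNIV. g k)"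
    by (simp add: mchoose_def mfact_def g_def prod.distrib)
  have 2: "(\<Prod>k\<in>UNIV. g k) = g i * (\<Prod>k\<in>UNIV-{i}. g k)" by (simp add: prod.remove)
  have 3: "(\<Prod>k\<in>UNIV-{i}. g k) = (\<Prod>k\<in>UNIV-{i}. h k)"
    by (rule prod.cong) (auto simp: delta_def g_def h_def)
  have 4: "a i * g i = h i"
    using absorb[of "a i" "m i + delta j i"] by (simp add: g_def h_def delta_def)
  have 5: "PG a (\<lambda>k. m k + delta i k + delta j k) = h i * (\<Prod>k\<in>UNIV-{i}. h k)"
    unfolding PG_def h_def by (simp add: prod.remove)
  show ?thesis unfolding 1 2 3 5 4[symmetric] by (simp add: mult.assoc)
qed

lemma PG_zero:
  assumes "\<not> (\<lambda>k. m k + delta j k) \<le> (\<lambda>k. a k - delta i k)"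
  shows "PG a (\<lambda>k. m k + delta i k + delta j k) = 0"
proof -
  from assms obtain k where "\<not> m k + delta j k \<le> a k - delta i k" by (auto simp: le_fun_def)
  then have "a k < m k + delta i k + delta j k" by linarith
  then have "(a k choose (m k + delta i k + delta j k)) * fact (m k + delta i k + delta j k) = 0"
    by simp
  then show ?thesis unfolding PG_def by (intro prod_zero) auto
qed

lemma reindex_shift:
  fixes H R :: "'n::finite mon \<Rightarrow> 'k::comm_ring_1"
  shows "(\<Sum>m\<in>{m. m \<le> (\<lambda>k. a k - delta i k)}. if 1 \<le> m j then
       of_nat (a i) * wcm (\<lambda>k. a k - delta i k) m * H (\<lambda>k. (a k - delta i k) - m k) * R (\<lambda>k. m k - delta j k) else 0)
    = (\<Sum>m'\<in>{m'. m' \<le> a}. of_nat (PG a (\<lambda>k. m' k + delta i k + delta j k))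
          * H (\<lambda>k. a k - (m' k + delta i k + delta j k)) * R m')"
proof -
  define s where "s m' = (\<lambda>k. m' k + delta j k)" for m' :: "'n mon"
  define V where "V = {m'. s m' \<le> (\<lambda>k. a k - delta i k)}"
  define \<Psi> where "\<Psi> m = (if 1 \<le> m j then
       of_nat (a i) * wcm (\<lambda>k. a k - delta i k) m * H (\<lambda>k. (a k - delta i k) - m k) * R (\<lambda>k. m k - delta j k) else (0::'k))" for m
  define \<Phi> where "\<Phi> m' = of_nat (PG a (\<lambda>k. m' k + delta i k + delta j k))
          * H (\<lambda>k. a k - (m' k + delta i k + delta j k)) * R m'" for m'
  have VU: "V \<subseteq> {m'. m' \<le> a}"
  proof
    fix m' assume "m' \<in> V"
    then have h: "\<And>k. m' k + delta j k \<le> a k - delta i k" by (simp add: V_def s_def le_fun_def)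
    have "m' k \<le> a k" for k using h[of k] by linarith
    then show "m' \<in> {m'. m' \<le> a}" by (simp add: le_fun_def)
  qed
  have "(\<Sum>m'\<in>{m'. m' \<le> a}. \<Phi> m') = (\<Sum>m'\<in>V. \<Phi> m')"
    by (rule sum.mono_neutral_right) (use VU in \<open>auto simp: fin_le V_def s_def \<Phi>_def PG_zero\<close>)
  also have "\<dots> = (\<Sum>m'\<in>V. \<Psi> (s m'))"
  proof (rule sum.cong[OF refl])
    fix m' assume "m' \<in> V"
    have e1: "(\<lambda>k. s m' k - delta j k) = m'" by (simp add: s_def)
    have e2: "(\<lambda>k. (a k - delta i k) - s m' k) = (\<lambda>k. a k - (m' k + delta i k + delta j k))"
      by (simp add: s_def fun_eq_iff algebra_simps)
    have e3: "1 \<le> s m' j" by (simp add: s_def delta_def)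
    have e4: "of_nat (a i) * wcm (\<lambda>k. a k - delta i k) (s m') = (of_nat (PG a (\<lambda>k. m' k + delta i k + delta j k)) :: 'k)"
      unfolding wcm_def s_def PG_shift[symmetric] by simp
    show "\<Phi> m' = \<Psi> (s m')"
      unfolding \<Psi>_def \<Phi>_def using e1 e2 e3 e4 by simp
  qed
  also have "\<dots> = (\<Sum>m\<in>s ` V. \<Psi> m)"
    by (subst sum.reindex) (auto simp: inj_on_def s_def fun_eq_iff)
  also have "\<dots> = (\<Sum>m\<in>{m. m \<le> (\<lambda>k. a k - delta i k)}. \<Psi> m)"
  proof (rule sum.mono_neutral_left)
    show "finite {m. m \<le> (\<lambda>k. a k - delta i k)}" by (rule fin_le)
    show "s ` V \<subseteq> {m. m \<le> (\<lambda>k. a k - delta i k)}" by (auto simp: V_def)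
    show "\<forall>m\<in>{m. m \<le> (\<lambda>k. a k - delta i k)} - s ` V. \<Psi> m = 0"
    proof
      fix m assume m: "m \<in> {m. m \<le> (\<lambda>k. a k - delta i k)} - s ` V"
      show "\<Psi> m = 0"
      proof (cases "1 \<le> m j")
        case True
        then have "m = s (\<lambda>k. m k - delta j k)" by (auto simp: s_def delta_def fun_eq_iff)
        moreover have "(\<lambda>k. m k - delta j k) \<in> V"
          using m True by (auto simp: V_def s_def delta_def le_fun_def)
        ultimately show ?thesis using m by blast
      qed (simp add: \<Psi>_def)
    qed
  qed
  finally show ?thesis unfolding \<Psi>_def \<Phi>_def by simp
qed

definition Rf :: "(nat \<Rightarrow> 'n \<Rightarrow> 'n \<Rightarrow> 'n \<Rightarrow> 'n mon \<Rightarrow> 'k::comm_ring_1) \<Rightarrow> 'n \<Rightarrow> 'n \<Rightarrow> 'n \<Rightarrow> 'n::finite mon \<Rightarrow> 'k" where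
  "Rf p l i j m' = (\<Sum>N\<in>{1..Suc (mdeg m')}. p (N - 1) l i j m')"

lemma sum_delta_1: "(\<Sum>k\<in>UNIV. delta (j::'n::finite) k) = (1::nat)"
  unfolding delta_def by (subst sum.delta) simp_all

lemma mdeg_minus:
  assumes "1 \<le> m j"
  shows "mdeg m = Suc (mdeg (\<lambda>k. m k - delta j k))"
proof -
  have "mdeg m = (\<Sum>k\<in>UNIV. (m k - delta j k) + delta j k)"
    unfolding mdeg_def using assms by (intro sum.cong) (auto simp: delta_def)
  also have "\<dots> = mdeg (\<lambda>k. m k - delta j k) + (\<Sum>k\<in>UNIV. delta j k)"
    by (simp add: sum.distrib mdeg_def)
  finally show ?thesis by (simp add: sum_delta_1)
qed

lemma Qf_alt: "Qf p l i m = (\<Sum>j\<in>UNIV. if 1 \<le> m j then Rf p l i j (\<lambda>k. m k - delta j k) else 0)"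
proof -
  have "Qf p l i m = (\<Sum>j\<in>UNIV. \<Sum>N\<in>{1..mdeg m}. if 1 \<le> m j then p (N - 1) l i j (\<lambda>t. m t - delta j t) else 0)"
    unfolding Qf_def by (rule sum.swap)
  also have "\<dots> = (\<Sum>j\<in>UNIV. if 1 \<le> m j then Rf p l i j (\<lambda>k. m k - delta j k) else 0)"
  proof (rule sum.cong[OF refl])
    fix j
    show "(\<Sum>N\<in>{1..mdeg m}. if 1 \<le> m j then p (N - 1) l i j (\<lambda>t. m t - delta j t) else 0)
        = (if 1 \<le> m j then Rf p l i j (\<lambda>k. m k - delta j k) else 0)"
    proof (cases "1 \<le> m j")
      case True
      then show ?thesis unfolding Rf_def using mdeg_minus[of m j, OF True] by simp
    qed simp
  qed
  finally show ?thesis .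
qed

lemma antisym_sum0:
  fixes f :: "'a \<Rightarrow> 'a \<Rightarrow> 'k::field"
  assumes "finite A" "\<And>i j. f j i = - f i j" "(2::'k) \<noteq> 0"
  shows "(\<Sum>i\<in>A. \<Sum>j\<in>A. f i j) = 0"
proof -
  let ?S = "(\<Sum>i\<in>A. \<Sum>j\<in>A. f i j)"
  have "?S = (\<Sum>j\<in>A. \<Sum>i\<in>A. f i j)" by (rule sum.swap)
  also have "\<dots> = (\<Sum>j\<in>A. \<Sum>i\<in>A. - f j i)" by (intro sum.cong refl) (rule assms(2))
  also have "\<dots> = - ?S" by (simp add: sum_negf)
  finally have h: "?S = - ?S" .
  have "?S + ?S = 0" using h by (metis add.right_inverse)
  then have "2 * ?S = 0" by (simp only: mult_2)
  then show ?thesis using assms(3) by simp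
qed

lemma key:
  fixes p :: "nat \<Rightarrow> 'n::finite \<Rightarrow> 'n \<Rightarrow> 'n \<Rightarrow> 'n mon \<Rightarrow> 'k::field"
  assumes antisym: "\<And>d l i j m. p d l i j m = - p d l j i m" and two: "(2::'k) \<noteq> 0"
  shows "(\<Sum>i\<in>UNIV. of_nat (a i) * kern (Xgen p i) (\<lambda>k. a k - delta i k) t)
       = of_nat (mdeg a) * (if t = a then 1 else 0)"
proof -
  define H where "H l x = (if t = (\<lambda>k. delta l k + x k) then 1 else (0::'k))" for l x
  define \<Phi> where "\<Phi> l i j m' = of_nat (PG a (\<lambda>k. m' k + delta i k + delta j k))
          * H l (\<lambda>k. a k - (m' k + delta i k + delta j k)) * Rf p l i j m'" for l i j m'
  define X where "X i l = (\<Sum>m\<in>{m. m \<le> (\<lambda>k. a k - delta i k)}. if t = (\<lambda>k. delta l k + ((a k - delta i k) - m k))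
          then Qf p l i m * wcm (\<lambda>k. a k - delta i k) m else 0)" for i l
  have split: "(\<Sum>i\<in>UNIV. of_nat (a i) * kern (Xgen p i) (\<lambda>k. a k - delta i k) t)
     = (\<Sum>i\<in>UNIV. of_nat (a i) * (if t = (\<lambda>k. delta i k + (a k - delta i k)) then 1 else 0))
     + (\<Sum>i\<in>UNIV. of_nat (a i) * (\<Sum>l\<in>UNIV. X i l))"
    unfolding kern_X X_def by (simp add: distrib_left sum.distrib)
  have part1: "(\<Sum>i\<in>UNIV. of_nat (a i) * (if t = (\<lambda>k. delta i k + (a k - delta i k)) then 1 else (0::'k)))
      = of_nat (mdeg a) * (if t = a then 1 else 0)"
  proof -
    have "(\<Sum>i\<in>UNIV. of_nat (a i) * (if t = (\<lambda>k. delta i k + (a k - delta i k)) then 1 else (0::'k)))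
        = (\<Sum>i\<in>UNIV. of_nat (a i) * (if t = a then 1 else 0))"
    proof (rule sum.cong[OF refl])
      fix i
      show "of_nat (a i) * (if t = (\<lambda>k. delta i k + (a k - delta i k)) then 1 else (0::'k))
          = of_nat (a i) * (if t = a then 1 else 0)"
      proof (cases "a i = 0")
        case False
        then have "(\<lambda>k. delta i k + (a k - delta i k)) = a" by (auto simp: fun_eq_iff delta_def)
        then show ?thesis by simp
      qed simp
    qed
    also have "\<dots> = of_nat (mdeg a) * (if t = a then 1 else 0)"
      by (simp add: sum_distrib_right mdeg_def)
    finally show ?thesis .
  qed
  have inner: "of_nat (a i) * X i l = (\<Sum>j\<in>UNIV. \<Sum>m'\<in>{m'. m' \<le> a}. \<Phi> l i j m')" for i l
  proof -
    have "of_nat (a i) * X i l = (\<Sum>m\<in>{m. m \<le> (\<lambda>k. a k - delta i k)}. \<Sum>j\<in>UNIV.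
        if 1 \<le> m j then of_nat (a i) * wcm (\<lambda>k. a k - delta i k) m * H l (\<lambda>k. (a k - delta i k) - m k)
           * Rf p l i j (\<lambda>k. m k - delta j k) else 0)"
      unfolding X_def sum_distrib_left
    proof (rule sum.cong[OF refl])
      fix m
      show "of_nat (a i) * (if t = (\<lambda>k. delta l k + ((a k - delta i k) - m k))
          then Qf p l i m * wcm (\<lambda>k. a k - delta i k) m else 0) =
        (\<Sum>j\<in>UNIV. if 1 \<le> m j then of_nat (a i) * wcm (\<lambda>k. a k - delta i k) m * H l (\<lambda>k. (a k - delta i k) - m k)
           * Rf p l i j (\<lambda>k. m k - delta j k) else 0)"
      proof (cases "t = (\<lambda>k. delta l k + ((a k - delta i k) - m k))")
        case True
        have H1: "H l (\<lambda>k. (a k - delta i k) - m k) = 1" unfolding H_def True by simp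
        show ?thesis unfolding Qf_alt H1 if_P[OF True]
          by (simp add: sum_distrib_left sum_distrib_right, intro sum.cong refl) (simp add: mult_ac)
      next
        case False
        have H0: "H l (\<lambda>k. (a k - delta i k) - m k) = 0" unfolding H_def using False by simp
        have "(if 1 \<le> m j then of_nat (a i) * wcm (\<lambda>k. a k - delta i k) m * H l (\<lambda>k. (a k - delta i k) - m k)
           * Rf p l i j (\<lambda>k. m k - delta j k) else 0) = 0" for j
          unfolding H0 by simp
        then show ?thesis using False by simp
      qed
    qed
    also have "\<dots> = (\<Sum>j\<in>UNIV. \<Sum>m\<in>{m. m \<le> (\<lambda>k. a k - delta i k)}.
        if 1 \<le> m j then of_nat (a i) * wcm (\<lambda>k. a k - delta i k) m * H l (\<lambda>k. (a k - delta i k) - m k)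
           * Rf p l i j (\<lambda>k. m k - delta j k) else 0)"
      by (rule sum.swap)
    also have "\<dots> = (\<Sum>j\<in>UNIV. \<Sum>m'\<in>{m'. m' \<le> a}. \<Phi> l i j m')"
      unfolding \<Phi>_def by (rule sum.cong[OF refl], rule reindex_shift)
    finally show ?thesis .
  qed
  have part2: "(\<Sum>i\<in>UNIV. of_nat (a i) * (\<Sum>l\<in>UNIV. X i l)) = 0"
  proof -
    have "(\<Sum>i\<in>UNIV. of_nat (a i) * (\<Sum>l\<in>UNIV. X i l)) = (\<Sum>i\<in>UNIV. \<Sum>l\<in>UNIV. of_nat (a i) * X i l)"
      by (simp add: sum_distrib_left)
    also have "\<dots> = (\<Sum>l\<in>UNIV. \<Sum>i\<in>UNIV. of_nat (a i) * X i l)" by (rule sum.swap)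
    also have "\<dots> = (\<Sum>l\<in>UNIV. \<Sum>i\<in>UNIV. \<Sum>j\<in>UNIV. \<Sum>m'\<in>{m'. m' \<le> a}. \<Phi> l i j m')"
      by (simp add: inner)
    also have "\<dots> = 0"
    proof (rule sum.neutral, rule ballI)
      fix l
      show "(\<Sum>i\<in>UNIV. \<Sum>j\<in>UNIV. \<Sum>m'\<in>{m'. m' \<le> a}. \<Phi> l i j m') = 0"
      proof (rule antisym_sum0[OF _ _ two])
        fix i j
        have "\<Phi> l j i m' = - \<Phi> l i j m'" for m'
        proof -
          have r: "Rf p l j i m' = - Rf p l i j m'"
            unfolding Rf_def by (subst antisym) (simp add: sum_negf)
          have e1: "(\<lambda>k. m' k + delta j k + delta i k) = (\<lambda>k. m' k + delta i k + delta j k)"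
            by (simp add: add_ac)
          have e2: "(\<lambda>k. a k - (m' k + delta j k + delta i k)) = (\<lambda>k. a k - (m' k + delta i k + delta j k))"
            by (simp add: add_ac)
          show ?thesis unfolding \<Phi>_def r e1 e2 by simp
        qed
        then show "(\<Sum>m'\<in>{m'. m' \<le> a}. \<Phi> l j i m') = - (\<Sum>m'\<in>{m'. m' \<le> a}. \<Phi> l i j m')"
          by (simp add: sum_negf)
      qed simp
    qed
    finally show ?thesis .
  qed
  show ?thesis using split part1 part2 by simp
qed

definition cnt :: "(nat \<Rightarrow> 'n) \<Rightarrow> nat set \<Rightarrow> 'n mon" where
  "cnt h A = (\<lambda>i. card {s\<in>A. h s = i})"

lemma group_sum:
  fixes \<phi> :: "'n::finite \<Rightarrow> 'k::comm_ring_1"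
  assumes "finite A"
  shows "(\<Sum>b\<in>A. \<phi> (h b)) = (\<Sum>i\<in>UNIV. of_nat (cnt h A i) * \<phi> i)"
proof -
  have "(\<Sum>b\<in>A. \<phi> (h b)) = (\<Sum>i\<in>UNIV. \<Sum>b\<in>{x. x \<in> A \<and> h x = i}. \<phi> (h b))"
    by (rule sum.group[symmetric]) (use assms in auto)
  also have "\<dots> = (\<Sum>i\<in>UNIV. \<Sum>b\<in>{x. x \<in> A \<and> h x = i}. \<phi> i)"
    by (intro sum.cong refl) auto
  also have "\<dots> = (\<Sum>i\<in>UNIV. of_nat (cnt h A i) * \<phi> i)"
    by (simp add: cnt_def)
  finally show ?thesis .
qed

lemma card_cnt:
  fixes h :: "nat \<Rightarrow> 'n::finite"
  assumes "finite A"
  shows "mdeg (cnt h A) = card A"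
proof -
  have "(\<Sum>b\<in>A. 1::int) = (\<Sum>i\<in>UNIV. of_nat (cnt h A i) * 1)"
    using group_sum[OF assms, of "\<lambda>_. 1::int" h] by simp
  then have "int (card A) = int (\<Sum>i\<in>UNIV. cnt h A i)" by simp
  then have "card A = (\<Sum>i\<in>UNIV. cnt h A i)" by (simp only: of_nat_eq_iff)
  then show ?thesis by (simp add: mdeg_def)
qed

lemma cnt_remove:
  assumes "finite A" "b \<in> A"
  shows "cnt h (A - {b}) = (\<lambda>k. cnt h A k - delta (h b) k)"
proof
  fix k
  show "cnt h (A - {b}) k = cnt h A k - delta (h b) k"
  proof (cases "k = h b")
    case True
    have "{s \<in> A - {b}. h s = k} = {s \<in> A. h s = k} - {b}" by auto
    moreover have "b \<in> {s \<in> A. h s = k}" using assms True by auto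
    ultimately show ?thesis using assms True by (simp add: cnt_def delta_def)
  next
    case False
    have "{s \<in> A - {b}. h s = k} = {s \<in> A. h s = k}" using False by auto
    then show ?thesis using False by (simp add: cnt_def delta_def)
  qed
qed

lemma core_Gs:
  fixes p :: "nat \<Rightarrow> 'n::finite \<Rightarrow> 'n \<Rightarrow> 'n \<Rightarrow> 'n mon \<Rightarrow> 'k::field"
  assumes antisym: "\<And>d l i j m. p d l i j m = - p d l j i m" and two: "(2::'k) \<noteq> 0"
  shows "finite A \<Longrightarrow> Gs (Xgen p) h A mzero t = of_nat (fact (card A)) * (if t = cnt h A then 1 else 0)"
proof (induction "card A" arbitrary: A t)
  case 0
  then have "A = {}" by simp
  then show ?case
    by (simp add: Gs_def wsum_def wprod_def wone_def cnt_def mzero_def)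
next
  case (Suc n)
  then have fin: "finite A" and ne: "A \<noteq> {}" by auto
  let ?X = "Xgen p"
  let ?W = "\<lambda>js. wprod (map (\<lambda>t. ?X (h t)) js)"
  have step: "(\<Sum>js\<in>permutations_of_set (A - {u}). wmul (?X (h u)) (?W js) mzero t)
      = of_nat (fact n) * kern (?X (h u)) (\<lambda>k. cnt h A k - delta (h u) k) t" if u: "u \<in> A" for u
  proof -
    define C where "C = insert (cnt h (A - {u})) (\<Union>js\<in>permutations_of_set (A - {u}). {c. ?W js mzero c \<noteq> 0})"
    have finC: "finite C" unfolding C_def
      using weyl_wprod[of "map (\<lambda>t. ?X (h t)) js" for js] weyl_Xgen
      by (auto simp: is_weyl_def)
    have cardu: "card (A - {u}) = n" using Suc.hyps(2) fin u by simp
    have "(\<Sum>js\<in>permutations_of_set (A - {u}). wmul (?X (h u)) (?W js) mzero t)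
        = (\<Sum>js\<in>permutations_of_set (A - {u}). \<Sum>c\<in>C. ?W js mzero c * kern (?X (h u)) c t)"
      by (intro sum.cong refl wmul_mzero finC) (auto simp: C_def)
    also have "\<dots> = (\<Sum>c\<in>C. (\<Sum>js\<in>permutations_of_set (A - {u}). ?W js mzero c) * kern (?X (h u)) c t)"
      by (subst sum.swap) (simp add: sum_distrib_right)
    also have "\<dots> = (\<Sum>c\<in>C. Gs ?X h (A - {u}) mzero c * kern (?X (h u)) c t)"
      by (simp add: Gs_def wsum_def)
    also have "\<dots> = (\<Sum>c\<in>C. (if c = cnt h (A - {u}) then of_nat (fact n) * kern (?X (h u)) c t else 0))"
      using Suc.hyps(1)[OF cardu[symmetric]] fin cardu by (intro sum.cong refl) simp
    also have "\<dots> = of_nat (fact n) * kern (?X (h u)) (cnt h (A - {u})) t"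
      using finC by (subst sum.delta) (auto simp: C_def)
    also have "\<dots> = of_nat (fact n) * kern (?X (h u)) (\<lambda>k. cnt h A k - delta (h u) k) t"
      by (simp only: cnt_remove[OF fin u, of h])
    finally show ?thesis .
  qed
  have "Gs ?X h A mzero t = (\<Sum>u\<in>A. of_nat (fact n) * kern (?X (h u)) (\<lambda>k. cnt h A k - delta (h u) k) t)"
    unfolding Gs_decomp[OF fin ne] by (rule sum.cong[OF refl], rule step)
  also have "\<dots> = of_nat (fact n) * (\<Sum>u\<in>A. (\<lambda>i. kern (?X i) (\<lambda>k. cnt h A k - delta i k) t) (h u))"
    by (simp add: sum_distrib_left)
  also have "\<dots> = of_nat (fact n) * (\<Sum>i\<in>UNIV. of_nat (cnt h A i) * kern (?X i) (\<lambda>k. cnt h A k - delta i k) t)"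
    using group_sum[OF fin, of "\<lambda>i. kern (?X i) (\<lambda>k. cnt h A k - delta i k) t" h] by simp
  also have "\<dots> = of_nat (fact n) * (of_nat (mdeg (cnt h A)) * (if t = cnt h A then 1 else 0))"
    by (simp only: key[OF antisym two])
  also have "\<dots> = of_nat (fact (card A)) * (if t = cnt h A then 1 else 0)"
    using card_cnt[OF fin, of h] Suc.hyps(2)[symmetric] by (simp add: algebra_simps)
  finally show ?case .
qed

lemma cnt_list: "cnt (\<lambda>t. xs ! t) {..<length xs} = count_list xs"
  by (auto simp: cnt_def fun_eq_iff count_list_eq_length_filter length_filter_conv_card intro!: arg_cong[where f = card])

lemma core_esym:
  fixes p :: "nat \<Rightarrow> 'n::finite \<Rightarrow> 'n \<Rightarrow> 'n \<Rightarrow> 'n mon \<Rightarrow> 'k::field"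
  assumes antisym: "\<And>d l i j m. p d l i j m = - p d l j i m" and two: "(2::'k) \<noteq> 0"
  shows "esym (Xgen p) xs mzero t = of_nat (fact (length xs)) * mono_of xs t"
  unfolding esym_Gs using core_Gs[OF antisym two, where A="{..<length xs}" and h="\<lambda>t. xs ! t" and t=t]
  by (simp add: cnt_list mono_of_def)

definition mlist :: "'n::{finite,linorder} mon \<Rightarrow> 'n list" where
  "mlist a = sorted_list_of_multiset (Abs_multiset a)"

lemma count_mlist: "count_list (mlist a) = a"
proof
  fix x
  have "count_list (mlist a) x = count (mset (mlist a)) x" by (simp add: count_mset)
  also have "\<dots> = count (Abs_multiset a) x" by (simp add: mlist_def)
  also have "\<dots> = a x" by (subst count_Abs_multiset) auto
  finally show "count_list (mlist a) x = a x" .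
qed

lemma sorted_mlist: "sorted (mlist a)" by (simp add: mlist_def)

lemma mdeg_count: "mdeg (count_list (xs::'n::finite list)) = length xs"
  unfolding mdeg_def by (rule sum_count_set) auto

lemma length_mlist: "length (mlist a) = mdeg a"
  using mdeg_count[of "mlist a"] by (simp add: count_mlist)

lemma sorted_eq:
  assumes "sorted (xs::'a::linorder list)" "sorted ys" "count_list xs = count_list ys"
  shows "xs = ys"
proof -
  have "mset ys = mset xs" using assms(3) by (intro multiset_eqI) (simp add: count_mset)
  then have "sort xs = ys" using assms(2) by (rule properties_for_sort)
  then show ?thesis using assms(1) by (simp add: sorted_sort_id)
qed

lemma mlist_count: "sorted xs \<Longrightarrow> mlist (count_list xs) = xs"
  by (rule sorted_eq) (simp_all add: sorted_mlist count_mlist)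

definition Emap :: "(nat \<Rightarrow> 'n \<Rightarrow> 'n \<Rightarrow> 'n \<Rightarrow> 'n mon \<Rightarrow> 'k::comm_ring_1) \<Rightarrow> ('n::{finite,linorder} mon \<Rightarrow> 'k) \<Rightarrow> ('n mon \<Rightarrow> 'n mon \<Rightarrow> 'k)" where
  "Emap p P = wsum (\<lambda>a. wscale (P a) (esym (Xgen p) (mlist a))) {a. P a \<noteq> 0}"

lemma E_sup:
  assumes "finite S" "{a. P a \<noteq> 0} \<subseteq> S"
  shows "Emap p P b a' = (\<Sum>a\<in>S. P a * esym (Xgen p) (mlist a) b a')"
  unfolding Emap_def wsum_def wscale_def
  by (rule sum.mono_neutral_left) (use assms in auto)

lemma E_lin: "lin_map (Emap p)"
  unfolding lin_map_def
proof (intro conjI allI impI)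
  fix P Q :: "'a mon \<Rightarrow> 'b" assume P: "is_poly P" and Q: "is_poly Q"
  let ?S = "{a. P a \<noteq> 0} \<union> {a. Q a \<noteq> 0}"
  have fS: "finite ?S" using P Q by (simp add: is_poly_def)
  show "Emap p (\<lambda>a. P a + Q a) = wadd (Emap p P) (Emap p Q)"
  proof (intro ext)
    fix b a'
    have "Emap p (\<lambda>a. P a + Q a) b a' = (\<Sum>a\<in>?S. (P a + Q a) * esym (Xgen p) (mlist a) b a')"
      by (rule E_sup[OF fS]) auto
    also have "\<dots> = (\<Sum>a\<in>?S. P a * esym (Xgen p) (mlist a) b a') + (\<Sum>a\<in>?S. Q a * esym (Xgen p) (mlist a) b a')"
      by (simp add: distrib_right sum.distrib)
    also have "\<dots> = Emap p P b a' + Emap p Q b a'"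
      by (simp add: E_sup[OF fS])
    finally show "Emap p (\<lambda>a. P a + Q a) b a' = wadd (Emap p P) (Emap p Q) b a'"
      by (simp add: wadd_def)
  qed
next
  fix c and P :: "'a mon \<Rightarrow> 'b" assume P: "is_poly P"
  have fS: "finite {a. P a \<noteq> 0}" using P by (simp add: is_poly_def)
  show "Emap p (\<lambda>a. c * P a) = wscale c (Emap p P)"
  proof (intro ext)
    fix b a'
    have "Emap p (\<lambda>a. c * P a) b a' = (\<Sum>a\<in>{a. P a \<noteq> 0}. (c * P a) * esym (Xgen p) (mlist a) b a')"
      by (rule E_sup[OF fS]) auto
    also have "\<dots> = c * Emap p P b a'"
      by (simp add: E_sup[OF fS] sum_distrib_left mult.assoc)
    finally show "Emap p (\<lambda>a. c * P a) b a' = wscale c (Emap p P) b a'"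
      by (simp add: wscale_def)
  qed
qed

lemma E_weyl: "is_poly P \<Longrightarrow> is_weyl (Emap p P)"
  unfolding Emap_def is_poly_def
  by (intro weyl_wsum weyl_wscale weyl_esym) auto

lemma supp_mono: "{a. (mono_of xs a :: 'k::zero_neq_one) \<noteq> 0} = {count_list xs}"
  by (auto simp: mono_of_def)

lemma poly_mono: "is_poly (mono_of xs :: 'n mon \<Rightarrow> 'k::zero_neq_one)"
  unfolding is_poly_def supp_mono by simp

lemma E_mono: "sorted xs \<Longrightarrow> Emap p (mono_of xs) = esym (Xgen p) xs"
  unfolding Emap_def supp_mono wsum_def wscale_def
  by (simp add: mono_of_def mlist_count)

lemma E_mzero:
  fixes p :: "nat \<Rightarrow> 'n::{finite,linorder} \<Rightarrow> 'n \<Rightarrow> 'n \<Rightarrow> 'n mon \<Rightarrow> 'k::field"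
  assumes antisym: "\<And>d l i j m. p d l i j m = - p d l j i m" and two: "(2::'k) \<noteq> 0"
    and P: "is_poly P"
  shows "Emap p P mzero t = of_nat (fact (mdeg t)) * P t"
proof -
  have fS: "finite {a. P a \<noteq> 0}" using P by (simp add: is_poly_def)
  have "Emap p P mzero t = (\<Sum>a\<in>{a. P a \<noteq> 0}. P a * esym (Xgen p) (mlist a) mzero t)"
    by (rule E_sup[OF fS]) auto
  also have "\<dots> = (\<Sum>a\<in>{a. P a \<noteq> 0}. if a = t then P a * of_nat (fact (mdeg a)) else 0)"
    by (intro sum.cong refl)
       (auto simp: core_esym[OF antisym two] mono_of_def count_mlist length_mlist)
  also have "\<dots> = of_nat (fact (mdeg t)) * P t"
    using fS by (subst sum.delta) (auto simp: mult.commute)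
  finally show ?thesis .
qed

lemma esym_replicate:
  assumes c: "CHAR('k::comm_ring_1) = c" "c \<noteq> 0"
  shows "esym (X :: 'n::finite \<Rightarrow> ('n mon \<Rightarrow> 'n mon \<Rightarrow> 'k)) (replicate c i0) = (\<lambda>b a. 0)"
proof (intro ext)
  fix b a
  let ?W = "wprod (map (\<lambda>t. X i0) [0..<c])"
  have "esym X (replicate c i0) b a = (\<Sum>\<sigma>\<in>{\<sigma>. \<sigma> permutes {..<c}}. ?W b a)"
    unfolding esym_def wsum_def length_replicate
  proof (intro sum.cong refl)
    fix \<sigma> assume "\<sigma> \<in> {\<sigma>. \<sigma> permutes {..<c}}"
    then have "\<sigma> permutes {..<c}" by simp
    then have "\<sigma> t < c" if "t < c" for t using permutes_in_image[of \<sigma> "{..<c}" t] that by simp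
    then have m: "map (\<lambda>t. X (replicate c i0 ! \<sigma> t)) [0..<c] = map (\<lambda>t. X i0) [0..<c]"
      by (intro map_cong) auto
    show "wprod (map (\<lambda>t. X (replicate c i0 ! \<sigma> t)) [0..<c]) b a = ?W b a"
      by (simp only: m)
  qed
  also have "\<dots> = of_nat (fact c) * ?W b a"
    by (simp add: card_permutations[of "{..<c}" c])
  also have "(of_nat (fact c) :: 'k) = 0"
    using c by (simp add: of_nat_eq_0_iff_char_dvd dvd_fact)
  finally show "esym X (replicate c i0) b a = 0" by simp
qed

lemma two_ne_0:
  assumes "CHAR('k::field) \<noteq> 2"
  shows "(2::'k) \<noteq> 0"
proof
  assume "(2::'k) = 0"
  then have "of_nat 2 = (0::'k)" by simp
  then have d: "CHAR('k) dvd 2" by (simp only: of_nat_eq_0_iff_char_dvd)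
  have "CHAR('k) \<le> 2" using dvd_imp_le[OF d] by simp
  moreover have "CHAR('k) \<noteq> 0" proof assume "CHAR('k) = 0" with d show False by simp qed
  moreover have "CHAR('k) \<noteq> 1" using CHAR_not_1 by simp
  ultimately have "CHAR('k) = 2" by linarith
  with assms show False by simp
qed

lemma fact_ne0: "CHAR('k::field) = 0 \<Longrightarrow> (of_nat (fact n) :: 'k) \<noteq> 0"
  by (simp add: of_nat_eq_0_iff_char_dvd)

theorem corollary2p2:
  fixes p :: "nat \<Rightarrow> 'n::{finite,linorder} \<Rightarrow> 'n \<Rightarrow> 'n \<Rightarrow> 'n mon \<Rightarrow> 'k::field"
  assumes char_ne_2: "CHAR('k) \<noteq> 2"
    and homog: "\<And>d l i j m. p d l i j m \<noteq> 0 \<Longrightarrow> mdeg m = d"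
    and antisym: "\<And>d l i j m. p d l i j m = - p d l j i m"
  shows
    "(\<exists>E. lin_map E
        \<and> (\<forall>P. is_poly P \<longrightarrow> is_weyl (E P))
        \<and> (\<forall>xs. sorted xs \<longrightarrow> E (mono_of xs) = esym (Xgen p) xs)
        \<and> (\<forall>k P. is_poly P \<longrightarrow> (\<forall>a. P a \<noteq> 0 \<longrightarrow> mdeg a = k) \<longrightarrow>
               fock (E P) vac = (\<lambda>a. of_nat (fact k) * P a))
        \<and> (inj_on E {P. is_poly P} \<longleftrightarrow> CHAR('k) = 0)
        \<and> (CHAR('k) = 0 \<longrightarrow>
             (\<forall>S c. finite S \<longrightarrow> (\<forall>xs\<in>S. sorted xs) \<longrightarrow>
                wsum (\<lambda>xs. wscale (c xs) (E (mono_of xs))) S = wzero \<longrightarrow>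
                (\<forall>xs\<in>S. c xs = 0))))
     \<and> (CHAR('k) = 0 \<longrightarrow>
          (\<exists>e. lin_map e
             \<and> (\<forall>P. is_poly P \<longrightarrow> is_weyl (e P))
             \<and> (\<forall>xs. sorted xs \<longrightarrow>
                  e (mono_of xs) = wscale (inverse (of_nat (fact (length xs)))) (esym (Xgen p) xs))
             \<and> inj_on e {P. is_poly P}))"
proof -
  have two: "(2::'k) \<noteq> 0" using char_ne_2 by (rule two_ne_0)
  let ?E = "Emap p"
  have c4: "\<forall>k P. is_poly P \<longrightarrow> (\<forall>a. P a \<noteq> 0 \<longrightarrow> mdeg a = k) \<longrightarrow>
               fock (?E P) vac = (\<lambda>a. of_nat (fact k) * P a)"
  proof (intro allI impI ext)
    fix k P a assume P: "is_poly (P :: 'n mon \<Rightarrow> 'k)" and h: "\<forall>a. P a \<noteq> 0 \<longrightarrow> mdeg a = k"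
    have "fock (?E P) vac a = of_nat (fact (mdeg a)) * P a"
      unfolding fock_vac by (rule E_mzero[where p=p, OF antisym two P])
    also have "\<dots> = of_nat (fact k) * P a" using h by (cases "P a = 0") auto
    finally show "fock (?E P) vac a = of_nat (fact k) * P a" .
  qed
  have inj0: "inj_on ?E {P. is_poly P}" if ch: "CHAR('k) = 0"
  proof (rule inj_onI)
    fix P Q assume P: "P \<in> {P. is_poly P}" and Q: "Q \<in> {P. is_poly P}" and eq: "?E P = ?E Q"
    show "P = Q"
    proof
      fix t
      have "of_nat (fact (mdeg t)) * P t = of_nat (fact (mdeg t)) * (Q t :: 'k)"
        using E_mzero[where p=p, OF antisym two, where P=P and t=t] E_mzero[where p=p, OF antisym two, where P=Q and t=t] P Q eq by auto
      then show "P t = Q t" using fact_ne0[OF ch] by simp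
    qed
  qed
  have injc: "CHAR('k) = 0" if inj: "inj_on ?E {P. is_poly P}"
  proof (rule ccontr)
    assume ne: "CHAR('k) \<noteq> 0"
    define xs where "xs = replicate CHAR('k) (undefined :: 'n)"
    have s: "sorted xs" by (simp add: xs_def)
    have "?E (mono_of xs) = esym (Xgen p) xs" by (rule E_mono[OF s])
    also have "\<dots> = (\<lambda>b a. 0)" unfolding xs_def by (rule esym_replicate[OF refl ne])
    finally have "?E (mono_of xs) = (\<lambda>b a. 0)" .
    moreover have "?E (\<lambda>a. 0) = (\<lambda>b a. 0)" by (simp add: Emap_def wsum_def)
    ultimately have "?E (mono_of xs) = ?E (\<lambda>a. 0)" by simp
    moreover have "is_poly (mono_of xs :: 'n mon \<Rightarrow> 'k)" by (rule poly_mono)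
    moreover have "is_poly (\<lambda>a::'n mon. 0::'k)" by (simp add: is_poly_def)
    ultimately have "(mono_of xs :: 'n mon \<Rightarrow> 'k) = (\<lambda>a. 0)" using inj by (auto dest: inj_onD)
    then have "(mono_of xs :: 'n mon \<Rightarrow> 'k) (count_list xs) = 0" by simp
    then show False by (simp add: mono_of_def)
  qed
  have c6: "CHAR('k) = 0 \<longrightarrow>
             (\<forall>S c. finite S \<longrightarrow> (\<forall>xs\<in>S. sorted xs) \<longrightarrow>
                wsum (\<lambda>xs. wscale (c xs) (?E (mono_of xs))) S = wzero \<longrightarrow>
                (\<forall>xs\<in>S. c xs = 0))"
  proof (intro impI allI ballI)
    fix S c xs0
    assume ch: "CHAR('k) = 0" and fS: "finite S" and srt: "\<forall>xs\<in>S. sorted xs"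
      and z: "wsum (\<lambda>xs. wscale (c xs) (?E (mono_of xs))) S = wzero" and x0: "xs0 \<in> S"
    have "0 = wsum (\<lambda>xs. wscale (c xs) (?E (mono_of xs))) S mzero (count_list xs0)"
      using z by (simp add: wzero_def)
    also have "\<dots> = (\<Sum>xs\<in>S. c xs * (of_nat (fact (length xs)) * mono_of xs (count_list xs0)))"
      unfolding wsum_def wscale_def
      by (intro sum.cong refl) (use srt in \<open>simp add: E_mono core_esym[where p=p, OF antisym two]\<close>)
    also have "\<dots> = (\<Sum>xs\<in>S. if xs = xs0 then c xs * of_nat (fact (length xs)) else 0)"
    proof (intro sum.cong refl)
      fix xs assume "xs \<in> S"
      then have "count_list xs0 = count_list xs \<longleftrightarrow> xs = xs0"
        using srt x0 sorted_eq[of xs0 xs] by auto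
      then show "c xs * (of_nat (fact (length xs)) * mono_of xs (count_list xs0)) =
          (if xs = xs0 then c xs * of_nat (fact (length xs)) else 0)"
        by (auto simp: mono_of_def)
    qed
    also have "\<dots> = c xs0 * of_nat (fact (length xs0))"
      using fS x0 by (subst sum.delta) auto
    finally have "c xs0 * of_nat (fact (length xs0)) = 0" by simp
    then show "c xs0 = 0" using fact_ne0[OF ch] by simp
  qed
  have part1: "\<exists>E. lin_map E
        \<and> (\<forall>P. is_poly P \<longrightarrow> is_weyl (E P))
        \<and> (\<forall>xs. sorted xs \<longrightarrow> E (mono_of xs) = esym (Xgen p) xs)
        \<and> (\<forall>k P. is_poly P \<longrightarrow> (\<forall>a. P a \<noteq> 0 \<longrightarrow> mdeg a = k) \<longrightarrow>
               fock (E P) vac = (\<lambda>a. of_nat (fact k) * P a))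
        \<and> (inj_on E {P. is_poly P} \<longleftrightarrow> CHAR('k) = 0)
        \<and> (CHAR('k) = 0 \<longrightarrow>
             (\<forall>S c. finite S \<longrightarrow> (\<forall>xs\<in>S. sorted xs) \<longrightarrow>
                wsum (\<lambda>xs. wscale (c xs) (E (mono_of xs))) S = wzero \<longrightarrow>
                (\<forall>xs\<in>S. c xs = 0)))"
    apply (rule exI[of _ ?E], intro conjI)
         apply (rule E_lin)
    using E_weyl apply blast
    using E_mono apply blast
      apply (rule c4)
    using inj0 injc apply blast
    apply (rule c6)
    done
  have part2: "\<exists>e. lin_map e
             \<and> (\<forall>P. is_poly P \<longrightarrow> is_weyl (e P))
             \<and> (\<forall>xs. sorted xs \<longrightarrow>
                  e (mono_of xs) = wscale (inverse (of_nat (fact (length xs)))) (esym (Xgen p) xs))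
             \<and> inj_on e {P. is_poly P}" if ch: "CHAR('k) = 0"
  proof -
    define sc where "sc P = (\<lambda>a. P a * inverse (of_nat (fact (mdeg a))) :: 'k)" for P :: "'n mon \<Rightarrow> 'k"
    define e where "e P = ?E (sc P)" for P
    have psc: "is_poly (sc P)" if "is_poly P" for P
      using that unfolding is_poly_def sc_def
      by (rule finite_subset[rotated]) auto
    have linA: "\<And>P Q. is_poly P \<Longrightarrow> is_poly Q \<Longrightarrow> ?E (\<lambda>a. P a + Q a) = wadd (?E P) (?E Q)"
      using E_lin[of p] unfolding lin_map_def by blast
    have linS: "\<And>c P. is_poly P \<Longrightarrow> ?E (\<lambda>a. c * P a) = wscale c (?E P)"
      using E_lin[of p] unfolding lin_map_def by blast
    have L1: "lin_map e"
      unfolding lin_map_def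
    proof (intro conjI allI impI)
      fix P Q :: "'n mon \<Rightarrow> 'k" assume P: "is_poly P" and Q: "is_poly Q"
      have "sc (\<lambda>a. P a + Q a) = (\<lambda>a. sc P a + sc Q a)" by (simp add: sc_def fun_eq_iff distrib_right)
      then show "e (\<lambda>a. P a + Q a) = wadd (e P) (e Q)"
        unfolding e_def by (simp only: linA[OF psc[OF P] psc[OF Q]])
    next
      fix c and P :: "'n mon \<Rightarrow> 'k" assume P: "is_poly P"
      have "sc (\<lambda>a. c * P a) = (\<lambda>a. c * sc P a)" by (simp add: sc_def fun_eq_iff mult.assoc)
      then show "e (\<lambda>a. c * P a) = wscale c (e P)"
        unfolding e_def by (simp only: linS[OF psc[OF P]])
    qed
    have L2: "\<forall>P. is_poly P \<longrightarrow> is_weyl (e P)"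
      unfolding e_def using E_weyl psc by blast
    have L3: "\<forall>xs. sorted xs \<longrightarrow>
                  e (mono_of xs) = wscale (inverse (of_nat (fact (length xs)))) (esym (Xgen p) xs)"
    proof (intro allI impI)
      fix xs :: "'n list" assume s: "sorted xs"
      have "sc (mono_of xs) = (\<lambda>a. inverse (of_nat (fact (length xs))) * mono_of xs a)"
        by (rule ext) (auto simp: sc_def mono_of_def mdeg_count)
      then show "e (mono_of xs) = wscale (inverse (of_nat (fact (length xs)))) (esym (Xgen p) xs)"
        unfolding e_def by (simp only: linS[OF poly_mono[of xs]] E_mono[OF s])
    qed
    have L4: "inj_on e {P. is_poly P}"
    proof (rule inj_onI)
      fix P Q assume P: "P \<in> {P. is_poly P}" and Q: "Q \<in> {P. is_poly P}" and eq: "e P = e Q"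
      show "P = Q"
      proof
        fix t :: "'n mon"
        have f: "(of_nat (fact (mdeg t)) :: 'k) \<noteq> 0" by (rule fact_ne0[OF ch])
        have pP: "is_poly (sc P)" and pQ: "is_poly (sc Q)" using P Q psc by auto
        have "of_nat (fact (mdeg t)) * sc P t = of_nat (fact (mdeg t)) * sc Q t"
          using E_mzero[where p=p, OF antisym two pP, where t=t] E_mzero[where p=p, OF antisym two pQ, where t=t] eq
          by (auto simp: e_def)
        then show "P t = Q t" using f by (simp add: sc_def)
      qed
    qed
    show ?thesis by (rule exI[of _ e], intro conjI L1 L2 L3 L4)
  qed
  show ?thesis by (rule conjI[OF part1 impI[OF part2]])
qed

end
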